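(* (a) For every odd integer $n\ge 3$, the cycle $C_n$ is $\mathbb{Z}_n$-distance antimagic. (b) Let $k\ge 2$ and let $n_1,\ldots,n_k\ge 3$ be odd integers each of which divides $k-1$. Then $C_{n_1}\Box\cdots\Box C_{n_k}$ is $\mathbb{Z}_{n_1}\times\cdots\times\mathbb{Z}_{n_k}$-distance antimagic. In particular, for every odd prime $p$ and integer $d\ge 1$, the Cartesian product of $pd+1$ copies of $C_p$ is $\mathbb{Z}_p^{pd+1}$-distance antimagic.
   Context: $C_n$ is the cycle of length $n$; $\mathbb{Z}_m$ is the cyclic group of integers modulo $m$. The Cartesian product $G_1\Box\cdots\Box G_k$ has vertex set $V(G_1)\times\cdots\times V(G_k)$, with two tuples adjacent iff they differ in exactly one coordinate $i$ and are adjacent there in $G_i$. For a graph $G$ with $n$ vertices and an Abelian group $A$ of order $n$ (written additively), and a bijection $f:V(G)\to A$, the weight of $x$ is $w_f(x)=\sum_{y\in N(x)} f(y)$ computed in $A$ ($N(x)$ the open neighbourhood). $f$ is an $A$-distance antimagic labelling if all weights are pairwise distinct; $G$ is $A$-distance antimagic if it admits such a labelling. *)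

theory Defs
  imports "HOL-Algebra.Algebra" "HOL-Computational_Algebra.Primes"
begin

text \<open>A (simple) graph is given by a vertex set V and an adjacency relation E;
  only adjacencies between vertices of V are relevant.\<close>

definition open_nbhd :: "'v set \<Rightarrow> ('v \<Rightarrow> 'v \<Rightarrow> bool) \<Rightarrow> 'v \<Rightarrow> 'v set" where
  "open_nbhd V E x = {y \<in> V. E x y}"

text \<open>Weight of x under labelling f, computed in the abelian group A
  (HOL-Algebra writes the group operation multiplicatively).\<close>
definition dist_weight :: "('g, 'c) monoid_scheme \<Rightarrow> 'v set \<Rightarrow> ('v \<Rightarrow> 'v \<Rightarrow> bool) \<Rightarrow> ('v \<Rightarrow> 'g) \<Rightarrow> 'v \<Rightarrow> 'g" where
  "dist_weight A V E f x = finprod A f (open_nbhd V E x)"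

definition distance_antimagic_labelling ::
  "('g, 'c) monoid_scheme \<Rightarrow> 'v set \<Rightarrow> ('v \<Rightarrow> 'v \<Rightarrow> bool) \<Rightarrow> ('v \<Rightarrow> 'g) \<Rightarrow> bool" where
  "distance_antimagic_labelling A V E f \<longleftrightarrow>
     bij_betw f V (carrier A) \<and> inj_on (dist_weight A V E f) V"

definition distance_antimagic ::
  "('g, 'c) monoid_scheme \<Rightarrow> 'v set \<Rightarrow> ('v \<Rightarrow> 'v \<Rightarrow> bool) \<Rightarrow> bool" where
  "distance_antimagic A V E \<longleftrightarrow> (\<exists>f. distance_antimagic_labelling A V E f)"

definition cycle_V :: "nat \<Rightarrow> nat set" where
  "cycle_V n = {..<n}"

definition cycle_E :: "nat \<Rightarrow> nat \<Rightarrow> nat \<Rightarrow> bool" where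
  "cycle_E n i j \<longleftrightarrow> j = (i + 1) mod n \<or> i = (j + 1) mod n"

definition cart_V :: "'i set \<Rightarrow> ('i \<Rightarrow> 'v set) \<Rightarrow> ('i \<Rightarrow> 'v) set" where
  "cart_V I V = (\<Pi>\<^sub>E i\<in>I. V i)"

definition cart_E :: "'i set \<Rightarrow> ('i \<Rightarrow> 'v \<Rightarrow> 'v \<Rightarrow> bool) \<Rightarrow> ('i \<Rightarrow> 'v) \<Rightarrow> ('i \<Rightarrow> 'v) \<Rightarrow> bool" where
  "cart_E I E x y \<longleftrightarrow> (\<exists>i\<in>I. E i (x i) (y i) \<and> (\<forall>j\<in>I. j \<noteq> i \<longrightarrow> x j = y j))"

end

theory Submission
  imports Defs
begin


lemma finprod_int_mod:
  assumes "finite A" "h \<in> A \<rightarrow> carrier (integer_mod_group n)"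
  shows "finprod (integer_mod_group n) h A = (\<Sum>a\<in>A. h a) mod int n"
  using assms
proof (induction A rule: finite_induct)
  case empty
  interpret comm_group "integer_mod_group n" by simp
  show ?case by simp
next
  case (insert a F)
  interpret comm_group "integer_mod_group n" by simp
  have "finprod (integer_mod_group n) h (insert a F) = h a \<otimes>\<^bsub>integer_mod_group n\<^esub> finprod (integer_mod_group n) h F"
    using insert by (intro finprod_insert) auto
  also have "\<dots> = (h a + (\<Sum>a\<in>F. h a) mod int n) mod int n" using insert by simp
  also have "\<dots> = (\<Sum>a\<in>insert a F. h a) mod int n" using insert by (simp add: mod_add_right_eq)
  finally show ?case .
qed

lemma comm_group_product:
  assumes "\<And>i. i \<in> I \<Longrightarrow> comm_group (G i)"
  shows "comm_group (product_group I G)"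
proof -
  have g: "group (product_group I G)" using assms by (intro product_group) (metis comm_group_def)
  show ?thesis
  proof (rule group.group_comm_groupI[OF g])
    fix x y assume "x \<in> carrier (product_group I G)" "y \<in> carrier (product_group I G)"
    then show "x \<otimes>\<^bsub>product_group I G\<^esub> y = y \<otimes>\<^bsub>product_group I G\<^esub> x"
      using assms by (auto intro!: restrict_ext simp: PiE_iff comm_monoid.m_comm comm_group_def)
  qed
qed

lemma finprod_product:
  assumes G: "\<And>i. i \<in> I \<Longrightarrow> comm_group (G i)" and "finite A"
    and "h \<in> A \<rightarrow> carrier (product_group I G)"
  shows "finprod (product_group I G) h A = (\<lambda>j\<in>I. finprod (G j) (\<lambda>a. h a j) A)"
  using assms(2,3)
proof (induction A rule: finite_induct)
  case empty
  interpret P: comm_group "product_group I G" using comm_group_product G by blast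
  have "finprod (product_group I G) h {} = (\<lambda>j\<in>I. \<one>\<^bsub>G j\<^esub>)" by simp
  also have "\<dots> = (\<lambda>j\<in>I. finprod (G j) (\<lambda>a. h a j) {})"
  proof (intro restrict_ext)
    fix j assume j: "j \<in> I"
    interpret Gj: comm_group "G j" using G j by blast
    show "\<one>\<^bsub>G j\<^esub> = finprod (G j) (\<lambda>a. h a j) {}" by simp
  qed
  finally show ?case .
next
  case (insert a F)
  interpret P: comm_group "product_group I G" using comm_group_product G by blast
  have "finprod (product_group I G) h (insert a F) = h a \<otimes>\<^bsub>product_group I G\<^esub> finprod (product_group I G) h F"
    using insert by (intro P.finprod_insert) auto
  also have "\<dots> = (\<lambda>j\<in>I. h a j \<otimes>\<^bsub>G j\<^esub> finprod (G j) (\<lambda>a. h a j) F)"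
    using insert by (auto intro!: restrict_ext)
  also have "\<dots> = (\<lambda>j\<in>I. finprod (G j) (\<lambda>a. h a j) (insert a F))"
  proof (intro restrict_ext)
    fix j assume j: "j \<in> I"
    interpret Gj: comm_group "G j" using G j by blast
    show "h a j \<otimes>\<^bsub>G j\<^esub> finprod (G j) (\<lambda>a. h a j) F = finprod (G j) (\<lambda>a. h a j) (insert a F)"
      using insert j by (subst Gj.finprod_insert) (auto simp: PiE_iff Pi_iff)
  qed
  finally show ?case .
qed



lemma mod2_inj:
  assumes "odd n" "(2 * i) mod int n = (2 * j) mod int n" "0 \<le> i" "i < int n" "0 \<le> j" "j < int n"
  shows "i = j"
proof -
  have "int n dvd 2 * (i - j)" using assms(2) by (metis mod_eq_dvd_iff right_diff_distrib)
  moreover have "coprime (int n) 2" using assms(1) by (simp add: coprime_commute)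
  ultimately have "int n dvd (i - j)" using coprime_dvd_mult_right_iff by blast
  then obtain c where c: "i - j = int n * c" by (auto simp: dvd_def)
  have "c = 0"
  proof (rule ccontr)
    assume "c \<noteq> 0"
    then have "\<bar>c\<bar> \<ge> 1" by linarith
    then have "int n * 1 \<le> int n * \<bar>c\<bar>" by (intro mult_left_mono) auto
    then have "\<bar>int n * c\<bar> \<ge> int n" by (simp add: abs_mult)
    then show False using c assms by linarith
  qed
  then show ?thesis using c by simp
qed

lemma pred_mod:
  fixes i j n :: nat
  assumes "i < n" "j < n"
  shows "(i = (j+1) mod n) \<longleftrightarrow> (j = (i+n-1) mod n)"
proof (cases "i = 0")
  case True
  then show ?thesis using assms
    by (cases "j + 1 = n") (auto simp: mod_if)
next
  case False
  then have "(i+n-1) mod n = i - 1" using assms by (simp add: mod_if)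
  then show ?thesis using assms False by (auto simp: mod_if)
qed

lemma cycle_nbhd:
  assumes "n \<ge> 3" "i < n"
  shows "open_nbhd (cycle_V n) (cycle_E n) i = {(i+1) mod n, (i+n-1) mod n}"
proof -
  have "open_nbhd (cycle_V n) (cycle_E n) i = {j. j < n \<and> (j = (i+1) mod n \<or> i = (j+1) mod n)}"
    by (auto simp: open_nbhd_def cycle_V_def cycle_E_def)
  also have "\<dots> = {j. j < n \<and> (j = (i+1) mod n \<or> j = (i+n-1) mod n)}"
    using pred_mod[of i n] assms by blast
  also have "\<dots> = {(i+1) mod n, (i+n-1) mod n}" using assms by auto
  finally show ?thesis .
qed

lemma succ_pred_ne:
  fixes i n :: nat
  assumes "n \<ge> 3" "i < n"
  shows "(i+1) mod n \<noteq> (i+n-1) mod n" "(i+1) mod n \<noteq> i" "(i+n-1) mod n \<noteq> i"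
proof -
  have a: "int ((i+1) mod n) = (int i + 1) mod int n" by (simp add: of_nat_mod ac_simps)
  have b: "int ((i+n-1) mod n) = (int i - 1) mod int n"
  proof -
    have "int ((i+n-1) mod n) = (int i + int n - 1) mod int n" using assms by (simp add: zmod_int of_nat_diff)
    also have "\<dots> = (int i - 1) mod int n" by (metis add.commute add_diff_eq mod_add_self2)
    finally show ?thesis .
  qed
  have c: "int i mod int n = int i" using assms by simp
  show "(i+1) mod n \<noteq> (i+n-1) mod n"
  proof
    assume "(i+1) mod n = (i+n-1) mod n"
    then have "(int i + 1) mod int n = (int i - 1) mod int n" using a b by metis
    then have "int n dvd (int i + 1) - (int i - 1)" by (simp only: mod_eq_dvd_iff)
    then have "int n dvd 2" by simp
    then have "int n \<le> 2" by (rule zdvd_imp_le) auto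
    then show False using assms by linarith
  qed
  show "(i+1) mod n \<noteq> i"
  proof
    assume "(i+1) mod n = i"
    then have "(int i + 1) mod int n = int i mod int n" using a c by metis
    then have "int n dvd (int i + 1) - int i" by (simp only: mod_eq_dvd_iff)
    then show False using assms by simp
  qed
  show "(i+n-1) mod n \<noteq> i"
  proof
    assume "(i+n-1) mod n = i"
    then have "(int i - 1) mod int n = int i mod int n" using b c by metis
    then have "int n dvd (int i - 1) - int i" by (simp only: mod_eq_dvd_iff)
    then show False using assms by simp
  qed
qed

lemma succ_pred_sum:
  fixes i n :: nat
  assumes "n \<ge> 3" "i < n"
  shows "(int ((i+1) mod n) + int ((i+n-1) mod n)) mod int n = (2 * int i) mod int n"
proof -
  have a: "int ((i+1) mod n) = (int i + 1) mod int n" by (simp add: of_nat_mod ac_simps)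
  have b: "int ((i+n-1) mod n) = (int i + int n - 1) mod int n" using assms by (simp add: zmod_int of_nat_diff)
  have "(int ((i+1) mod n) + int ((i+n-1) mod n)) mod int n = ((int i + 1) + (int i + int n - 1)) mod int n"
    unfolding a b by (simp add: mod_add_eq)
  also have "\<dots> = (2 * int i + int n) mod int n" by (simp add: algebra_simps)
  finally show ?thesis by simp
qed

lemma partA:
  assumes "odd n" "n \<ge> 3"
  shows "distance_antimagic (integer_mod_group n) (cycle_V n) (cycle_E n)"
proof -
  let ?f = "\<lambda>i::nat. int i"
  have bij: "bij_betw ?f (cycle_V n) (carrier (integer_mod_group n))"
    using assms unfolding cycle_V_def carrier_integer_mod_group bij_betw_def
    by (auto simp: inj_on_def image_iff intro!: bexI[where x="nat _"])
  have w: "dist_weight (integer_mod_group n) (cycle_V n) (cycle_E n) ?f i = (2 * int i) mod int n"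
    if "i < n" for i
  proof -
    have "dist_weight (integer_mod_group n) (cycle_V n) (cycle_E n) ?f i
       = finprod (integer_mod_group n) ?f {(i+1) mod n, (i+n-1) mod n}"
      unfolding dist_weight_def using cycle_nbhd[OF assms(2) that] by simp
    also have "\<dots> = (\<Sum>a\<in>{(i+1) mod n, (i+n-1) mod n}. int a) mod int n"
      using assms by (intro finprod_int_mod) (auto simp: carrier_integer_mod_group)
    also have "\<dots> = (2 * int i) mod int n"
      using succ_pred_ne[OF assms(2) that] succ_pred_sum[OF assms(2) that] by simp
    finally show ?thesis .
  qed
  have "inj_on (dist_weight (integer_mod_group n) (cycle_V n) (cycle_E n) ?f) (cycle_V n)"
  proof (rule inj_onI)
    fix x y assume xy: "x \<in> cycle_V n" "y \<in> cycle_V n" and eq: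
      "dist_weight (integer_mod_group n) (cycle_V n) (cycle_E n) ?f x = dist_weight (integer_mod_group n) (cycle_V n) (cycle_E n) ?f y"
    have "x < n" "y < n" using xy by (auto simp: cycle_V_def)
    moreover have "(2 * int x) mod int n = (2 * int y) mod int n" using w[OF \<open>x < n\<close>] w[OF \<open>y < n\<close>] eq by simp
    ultimately show "x = y" using mod2_inj[OF assms(1), of "int x" "int y"] by simp
  qed
  then show ?thesis using bij unfolding distance_antimagic_def distance_antimagic_labelling_def by blast
qed



definition nb :: "(nat \<Rightarrow> nat) \<Rightarrow> (nat \<Rightarrow> nat) \<Rightarrow> nat \<times> bool \<Rightarrow> nat \<Rightarrow> nat" where
  "nb n x p = (case p of (i, b) \<Rightarrow> x(i := if b then (x i + 1) mod n i else (x i + n i - 1) mod n i))"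

context
  fixes k :: nat and n :: "nat \<Rightarrow> nat"
  assumes n3: "\<And>i. i < k \<Longrightarrow> n i \<ge> 3"
begin

lemma nb_in:
  assumes "x \<in> cart_V {..<k} (\<lambda>i. cycle_V (n i))" "i < k"
  shows "nb n x (i, b) \<in> cart_V {..<k} (\<lambda>i. cycle_V (n i))"
  using assms n3[OF assms(2)]
  by (auto simp: nb_def cart_V_def cycle_V_def PiE_iff extensional_def)

lemma nbhd_eq:
  assumes x: "x \<in> cart_V {..<k} (\<lambda>i. cycle_V (n i))"
  shows "open_nbhd (cart_V {..<k} (\<lambda>i. cycle_V (n i))) (cart_E {..<k} (\<lambda>i. cycle_E (n i))) x
       = nb n x ` ({..<k} \<times> UNIV)"
proof (intro equalityI subsetI)
  fix y assume "y \<in> open_nbhd (cart_V {..<k} (\<lambda>i. cycle_V (n i))) (cart_E {..<k} (\<lambda>i. cycle_E (n i))) x"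
  then obtain i where y: "y \<in> cart_V {..<k} (\<lambda>i. cycle_V (n i))" and i: "i < k"
    and e: "cycle_E (n i) (x i) (y i)" and o: "\<forall>j<k. j \<noteq> i \<longrightarrow> x j = y j"
    by (auto simp: open_nbhd_def cart_E_def)
  have xi: "x i < n i" "y i < n i" using x y i by (auto simp: cart_V_def cycle_V_def PiE_iff)
  have yi: "y i = (x i + 1) mod n i \<or> y i = (x i + n i - 1) mod n i"
    using e pred_mod[OF xi(1) xi(2)] by (auto simp: cycle_E_def)
  have "y = x(i := y i)"
  proof
    fix j show "y j = (x(i := y i)) j"
    proof (cases "j < k")
      case True then show ?thesis using o by auto
    next
      case False then show ?thesis using x y by (auto simp: cart_V_def PiE_iff extensional_def)
    qed
  qed
  define b where "b = (y i = (x i + 1) mod n i)"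
  have "y i = (if b then (x i + 1) mod n i else (x i + n i - 1) mod n i)" using yi b_def by auto
  then have "y = nb n x (i, b)" using \<open>y = x(i := y i)\<close> by (simp add: nb_def)
  moreover have "(i, b) \<in> {..<k} \<times> UNIV" using i by simp
  ultimately show "y \<in> nb n x ` ({..<k} \<times> UNIV)" by (rule image_eqI)
next
  fix y assume "y \<in> nb n x ` ({..<k} \<times> UNIV)"
  then obtain i b where i: "i < k" and y: "y = nb n x (i, b)" by auto
  have xi: "x i < n i" using x i by (auto simp: cart_V_def cycle_V_def PiE_iff)
  have "cycle_E (n i) (x i) (y i)"
  proof (cases b)
    case True
    then have "y i = (x i + 1) mod n i" using y by (simp add: nb_def)
    then show ?thesis by (simp add: cycle_E_def)
  next
    case False
    then have yi: "y i = (x i + n i - 1) mod n i" using y by (simp add: nb_def)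
    have "n i > 0" using n3[OF i] by simp
    then have "y i < n i" unfolding yi by simp
    then have "x i = (y i + 1) mod n i" using pred_mod[of "x i" "n i" "y i"] xi yi by simp
    then show ?thesis by (simp add: cycle_E_def)
  qed
  moreover have "\<forall>j<k. j \<noteq> i \<longrightarrow> x j = y j" using y by (auto simp: nb_def)
  ultimately show "y \<in> open_nbhd (cart_V {..<k} (\<lambda>i. cycle_V (n i))) (cart_E {..<k} (\<lambda>i. cycle_E (n i))) x"
    using nb_in[OF x i] y i by (auto simp: open_nbhd_def cart_E_def)
qed

lemma nb_inj:
  assumes x: "x \<in> cart_V {..<k} (\<lambda>i. cycle_V (n i))"
  shows "inj_on (nb n x) ({..<k} \<times> UNIV)"
proof (rule inj_onI, clarify)
  fix i b i' b' assume i: "i < k" and i': "i' < k" and eq: "nb n x (i, b) = nb n x (i', b')"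
  have xi: "x i < n i" using x i by (auto simp: cart_V_def cycle_V_def PiE_iff)
  have ne: "nb n x (i, b) i \<noteq> x i" using succ_pred_ne[OF n3[OF i] xi] by (auto simp: nb_def)
  have "i = i'"
  proof (rule ccontr)
    assume "i \<noteq> i'"
    then have "nb n x (i', b') i = x i" by (simp add: nb_def)
    then show False using eq ne by simp
  qed
  moreover have "b = b'"
  proof (rule ccontr)
    assume "b \<noteq> b'"
    then have "nb n x (i, b) i \<noteq> nb n x (i, b') i"
      using succ_pred_ne[OF n3[OF i] xi] by (cases b; auto simp: nb_def)
    then show False using eq \<open>i = i'\<close> by simp
  qed
  ultimately show "i = i' \<and> b = b'" by simp
qed

lemma sum_nb:
  assumes x: "x \<in> cart_V {..<k} (\<lambda>i. cycle_V (n i))" and j: "j < k"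
  shows "(\<Sum>p\<in>{..<k} \<times> UNIV. int (nb n x p j))
     = int k * (2 * int (x j)) + (int ((x j + 1) mod n j) + int ((x j + n j - 1) mod n j) - 2 * int (x j))"
proof -
  let ?S = "int ((x j + 1) mod n j) + int ((x j + n j - 1) mod n j)"
  have "(\<Sum>p\<in>{..<k} \<times> UNIV. int (nb n x p j)) = (\<Sum>i<k. \<Sum>b\<in>UNIV. int (nb n x (i, b) j))"
    by (simp add: sum.cartesian_product)
  also have "\<dots> = (\<Sum>i<k. 2 * int (x j) + (if i = j then ?S - 2 * int (x j) else 0))"
    by (intro sum.cong) (auto simp: UNIV_bool nb_def)
  also have "\<dots> = int k * (2 * int (x j)) + (?S - 2 * int (x j))"
    using j by (simp add: sum.distrib)
  finally show ?thesis .
qed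

end



lemma mod_shift:
  fixes k :: nat and m :: nat and s xx :: int
  assumes "m dvd (k - 1)" "k \<ge> 1" "s mod int m = (2 * xx) mod int m"
  shows "(int k * (2 * xx) + (s - 2 * xx)) mod int m = (2 * xx) mod int m"
proof -
  obtain c where c: "k - 1 = m * c" using assms(1) by (auto simp: dvd_def)
  have "int k = int m * int c + 1" using c assms(2) by (metis of_nat_1 of_nat_add of_nat_mult le_add_diff_inverse2)
  then have eq: "int k * (2 * xx) + (s - 2 * xx) = s + int m * (int c * 2 * xx)" by (simp add: algebra_simps)
  have "(int k * (2 * xx) + (s - 2 * xx)) mod int m = s mod int m" by (simp only: eq mod_mult_self2)
  then show ?thesis using assms(3) by simp
qed



lemma carrG:
  assumes "\<And>i. i < k \<Longrightarrow> n i \<ge> (3::nat)"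
  shows "carrier (product_group {..<k} (\<lambda>i. integer_mod_group (n i))) = (\<Pi>\<^sub>E i\<in>{..<k}. {0..<int (n i)})"
proof -
  have "\<And>i. i \<in> {..<k} \<Longrightarrow> carrier (integer_mod_group (n i)) = {0..<int (n i)}"
    using assms by (fastforce simp: carrier_integer_mod_group)
  then show ?thesis by (simp only: carrier_product_group) (rule PiE_cong)
qed

lemma bijF:
  assumes "\<And>i. i < k \<Longrightarrow> n i \<ge> (3::nat)"
  shows "bij_betw (\<lambda>x::nat\<Rightarrow>nat. \<lambda>i\<in>{..<k}. int (x i)) (cart_V {..<k} (\<lambda>i. cycle_V (n i)))
     (\<Pi>\<^sub>E i\<in>{..<k}. {0..<int (n i)})"
proof (rule bij_betwI')
  fix x y :: "nat \<Rightarrow> nat" assume x: "x \<in> cart_V {..<k} (\<lambda>i. cycle_V (n i))" and y: "y \<in> cart_V {..<k} (\<lambda>i. cycle_V (n i))"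
  show "((\<lambda>i\<in>{..<k}. int (x i)) = (\<lambda>i\<in>{..<k}. int (y i))) = (x = y)"
  proof
    assume eq: "(\<lambda>i\<in>{..<k}. int (x i)) = (\<lambda>i\<in>{..<k}. int (y i))"
    show "x = y"
    proof
      fix j show "x j = y j"
      proof (cases "j < k")
        case True
        then have "int (x j) = int (y j)" using fun_cong[OF eq, of j] by simp
        then show ?thesis by simp
      next
        case False then show ?thesis using x y by (auto simp: cart_V_def PiE_iff extensional_def)
      qed
    qed
  qed simp
next
  fix x :: "nat \<Rightarrow> nat" assume "x \<in> cart_V {..<k} (\<lambda>i. cycle_V (n i))"
  then show "(\<lambda>i\<in>{..<k}. int (x i)) \<in> (\<Pi>\<^sub>E i\<in>{..<k}. {0..<int (n i)})"
    by (auto simp: cart_V_def cycle_V_def PiE_iff)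
next
  fix z assume z: "z \<in> (\<Pi>\<^sub>E i\<in>{..<k}. {0..<int (n i)})"
  let ?x = "\<lambda>i\<in>{..<k}. nat (z i)"
  have "?x \<in> cart_V {..<k} (\<lambda>i. cycle_V (n i))" using z by (auto simp: cart_V_def cycle_V_def PiE_iff nat_less_iff)
  moreover have "z = (\<lambda>i\<in>{..<k}. int (?x i))"
  proof
    fix j show "z j = (\<lambda>i\<in>{..<k}. int (?x i)) j"
      using z by (cases "j < k") (auto simp: PiE_iff extensional_def)
  qed
  ultimately show "\<exists>x\<in>cart_V {..<k} (\<lambda>i. cycle_V (n i)). z = (\<lambda>i\<in>{..<k}. int (x i))" by blast
qed



lemma wt:
  fixes k :: nat and n :: "nat \<Rightarrow> nat"
  assumes k: "k \<ge> 1" and hn: "\<forall>i<k. odd (n i) \<and> n i \<ge> 3 \<and> n i dvd (k - 1)"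
    and x: "x \<in> cart_V {..<k} (\<lambda>i. cycle_V (n i))"
  shows "dist_weight (product_group {..<k} (\<lambda>i. integer_mod_group (n i)))
     (cart_V {..<k} (\<lambda>i. cycle_V (n i))) (cart_E {..<k} (\<lambda>i. cycle_E (n i))) (\<lambda>x. \<lambda>i\<in>{..<k}. int (x i)) x
   = (\<lambda>j\<in>{..<k}. (2 * int (x j)) mod int (n j))"
proof -
  let ?I = "{..<k}"
  let ?G = "product_group ?I (\<lambda>i. integer_mod_group (n i))"
  let ?V = "cart_V ?I (\<lambda>i. cycle_V (n i))"
  let ?E = "cart_E ?I (\<lambda>i. cycle_E (n i))"
  let ?f = "\<lambda>x::nat\<Rightarrow>nat. \<lambda>i\<in>?I. int (x i)"
  have n3: "\<And>i. i < k \<Longrightarrow> n i \<ge> 3" using hn by auto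
  have fV: "?f y \<in> carrier ?G" if "y \<in> ?V" for y
  proof -
    have a: "bij_betw ?f ?V (\<Pi>\<^sub>E i\<in>?I. {0..<int (n i)})" using bijF[of k n] n3 by blast
    have b: "carrier ?G = (\<Pi>\<^sub>E i\<in>?I. {0..<int (n i)})" using carrG[of k n] n3 by blast
    show ?thesis using bij_betwE[OF a] that unfolding b by blast
  qed
  let ?N = "nb n x ` (?I \<times> UNIV)"
  have Nsub: "?N \<subseteq> ?V" using nb_in[of k n x] n3 x by auto
  have N: "open_nbhd ?V ?E x = ?N" using nbhd_eq[of k n x] n3 x by blast
  have inj: "inj_on (nb n x) (?I \<times> UNIV)" using nb_inj[of k n x] n3 x by blast
  have "dist_weight ?G ?V ?E ?f x = finprod ?G ?f ?N"
    unfolding dist_weight_def N ..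
  also have "\<dots> = (\<lambda>j\<in>?I. finprod (integer_mod_group (n j)) (\<lambda>y. ?f y j) ?N)"
  proof (rule finprod_product)
    show "?f \<in> ?N \<rightarrow> carrier ?G"
    proof
      fix y assume "y \<in> ?N" then show "?f y \<in> carrier ?G" using Nsub fV by blast
    qed
  qed auto
  also have "\<dots> = (\<lambda>j\<in>?I. (2 * int (x j)) mod int (n j))"
  proof (intro restrict_ext)
    fix j assume j: "j \<in> ?I"
    have xj: "x j < n j" using x j by (auto simp: cart_V_def cycle_V_def PiE_iff)
    have cj: "carrier ?G \<subseteq> {z. z j \<in> carrier (integer_mod_group (n j))}" using j by (auto simp: PiE_iff)
    have "finprod (integer_mod_group (n j)) (\<lambda>y. ?f y j) ?N = (\<Sum>y\<in>?N. ?f y j) mod int (n j)"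
    proof (rule finprod_int_mod)
      show "(\<lambda>y. ?f y j) \<in> ?N \<rightarrow> carrier (integer_mod_group (n j))" using Nsub fV cj by blast
    qed simp
    also have "(\<Sum>y\<in>?N. ?f y j) = (\<Sum>p\<in>?I \<times> UNIV. int (nb n x p j))"
      using j by (subst sum.reindex[OF inj]) auto
    also have "\<dots> = int k * (2 * int (x j)) + (int ((x j + 1) mod n j) + int ((x j + n j - 1) mod n j) - 2 * int (x j))"
      using j sum_nb[of k n x j] n3 x by auto
    also have "\<dots> mod int (n j) = (2 * int (x j)) mod int (n j)"
      using mod_shift[OF _ k succ_pred_sum[OF _ xj]] hn j by auto
    finally show "finprod (integer_mod_group (n j)) (\<lambda>y. ?f y j) ?N = (2 * int (x j)) mod int (n j)" .
  qed
  finally show ?thesis .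
qed



lemma partB:
  fixes k :: nat and n :: "nat \<Rightarrow> nat"
  assumes k: "k \<ge> 1" and hn: "\<forall>i<k. odd (n i) \<and> n i \<ge> 3 \<and> n i dvd (k - 1)"
  shows "distance_antimagic (product_group {..<k} (\<lambda>i. integer_mod_group (n i)))
              (cart_V {..<k} (\<lambda>i. cycle_V (n i))) (cart_E {..<k} (\<lambda>i. cycle_E (n i)))"
proof -
  let ?I = "{..<k}"
  let ?G = "product_group ?I (\<lambda>i. integer_mod_group (n i))"
  let ?V = "cart_V ?I (\<lambda>i. cycle_V (n i))"
  let ?E = "cart_E ?I (\<lambda>i. cycle_E (n i))"
  let ?f = "\<lambda>x::nat\<Rightarrow>nat. \<lambda>i\<in>?I. int (x i)"
  have n3: "\<And>i. i < k \<Longrightarrow> n i \<ge> 3" using hn by auto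
  have a: "bij_betw ?f ?V (\<Pi>\<^sub>E i\<in>?I. {0..<int (n i)})" using bijF[of k n] n3 by blast
  have b: "carrier ?G = (\<Pi>\<^sub>E i\<in>?I. {0..<int (n i)})" using carrG[of k n] n3 by blast
  have bij: "bij_betw ?f ?V (carrier ?G)" using a unfolding b .
  have "inj_on (dist_weight ?G ?V ?E ?f) ?V"
  proof (rule inj_onI)
    fix x y assume x: "x \<in> ?V" and y: "y \<in> ?V" and eq: "dist_weight ?G ?V ?E ?f x = dist_weight ?G ?V ?E ?f y"
    have eq2: "(\<lambda>j\<in>?I. (2 * int (x j)) mod int (n j)) = (\<lambda>j\<in>?I. (2 * int (y j)) mod int (n j))"
      using eq wt[OF k hn x] wt[OF k hn y] by simp
    show "x = y"
    proof
      fix j show "x j = y j"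
      proof (cases "j < k")
        case True
        have "(2 * int (x j)) mod int (n j) = (2 * int (y j)) mod int (n j)"
          using fun_cong[OF eq2, of j] True by simp
        moreover have "x j < n j" "y j < n j" using x y True by (auto simp: cart_V_def cycle_V_def PiE_iff)
        ultimately have "int (x j) = int (y j)" using mod2_inj[of "n j" "int (x j)" "int (y j)"] hn True by auto
        then show ?thesis by simp
      next
        case False then show ?thesis using x y by (auto simp: cart_V_def PiE_iff extensional_def)
      qed
    qed
  qed
  then show ?thesis using bij unfolding distance_antimagic_def distance_antimagic_labelling_def by blast
qed

theorem mainTheorem9:
  shows "(\<forall>n::nat. odd n \<and> n \<ge> 3 \<longrightarrow>
            distance_antimagic (integer_mod_group n) (cycle_V n) (cycle_E n))
       \<and> (\<forall>(k::nat) (n::nat \<Rightarrow> nat). k \<ge> 2 \<and> (\<forall>i<k. odd (n i) \<and> n i \<ge> 3 \<and> n i dvd (k - 1)) \<longrightarrow>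
            distance_antimagic (product_group {..<k} (\<lambda>i. integer_mod_group (n i)))
              (cart_V {..<k} (\<lambda>i. cycle_V (n i))) (cart_E {..<k} (\<lambda>i. cycle_E (n i))))
       \<and> (\<forall>(p::nat) (d::nat). Factorial_Ring.prime p \<and> odd p \<and> d \<ge> 1 \<longrightarrow>
            distance_antimagic (product_group {..<p * d + 1} (\<lambda>i. integer_mod_group p))
              (cart_V {..<p * d + 1} (\<lambda>i. cycle_V p)) (cart_E {..<p * d + 1} (\<lambda>i. cycle_E p)))"
proof (intro conjI allI impI)
  fix n :: nat assume "odd n \<and> n \<ge> 3"
  then show "distance_antimagic (integer_mod_group n) (cycle_V n) (cycle_E n)" using partA by blast
next
  fix k :: nat and n :: "nat \<Rightarrow> nat"
  assume h: "k \<ge> 2 \<and> (\<forall>i<k. odd (n i) \<and> n i \<ge> 3 \<and> n i dvd (k - 1))"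
  then have "k \<ge> 1" by simp
  then show "distance_antimagic (product_group {..<k} (\<lambda>i. integer_mod_group (n i)))
              (cart_V {..<k} (\<lambda>i. cycle_V (n i))) (cart_E {..<k} (\<lambda>i. cycle_E (n i)))"
    using partB[of k n] h by blast
next
  fix p d :: nat assume h: "Factorial_Ring.prime p \<and> odd p \<and> d \<ge> 1"
  then have "p \<ge> 2" using prime_ge_2_nat by blast
  moreover have "p \<noteq> 2" using h by auto
  ultimately have p3: "p \<ge> 3" by simp
  have "\<forall>i<p * d + 1. odd p \<and> p \<ge> 3 \<and> p dvd (p * d + 1 - 1)" using h p3 by simp
  then show "distance_antimagic (product_group {..<p * d + 1} (\<lambda>i. integer_mod_group p))
              (cart_V {..<p * d + 1} (\<lambda>i. cycle_V p)) (cart_E {..<p * d + 1} (\<lambda>i. cycle_E p))"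
    using partB[of "p * d + 1" "\<lambda>_. p"] by simp
qed

end
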